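(* Let $c>0$ and let $w$ be a solution on the interval $[\lambda_0,\lambda_1]$ of the ODE \[ w''(\lambda)-D(\lambda)\,w'(\lambda)+c^2 w(\lambda)=f(\lambda). \] Suppose that $\sup_{\lambda\in[\lambda_0,\lambda_1]}|D(\lambda)|\leqslant c$, and that there exists a function $S:[\lambda_0,\lambda_1]\to\mathbb{R}$ with $S(\eta)+D(\eta)\leqslant 0$ for all $\eta\in[\lambda_0,\lambda_1]$ and $\int_{\lambda_0}^{\lambda}|S(\eta)|\,d\eta\leqslant C_S$, where $C_S$ is a constant. Then for $\lambda\in[\lambda_0,\lambda_1]$, \[ |w(\lambda)|+|w'(\lambda)|\leqslant C\Big(|w(\lambda_0)|+|w'(\lambda_0)|+\int_{\lambda_0}^{\lambda}|f(\tau)|\,d\tau\Big), \] where $C$ is a constant depending only on $c$ and $C_S$. *)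

theory Defs
  imports "HOL-Analysis.Analysis"
begin

end

theory Submission imports Defs begin

lemma core:
  fixes c CS l0 l1 l eps :: real and w w' w'' D f S :: "real \<Rightarrow> real"
  assumes c: "c > 0" and eps: "eps > 0" and l: "l0 \<le> l" "l \<le> l1"
  and dw: "\<forall>x\<in>{l0..l1}. (w has_real_derivative w' x) (at x within {l0..l1})"
  and dw': "\<forall>x\<in>{l0..l1}. (w' has_real_derivative w'' x) (at x within {l0..l1})"
  and cD: "continuous_on {l0..l1} D" and cf: "continuous_on {l0..l1} f"
  and ode: "\<forall>x\<in>{l0..l1}. w'' x - D x * w' x + c\<^sup>2 * w x = f x"
  and SD: "\<forall>x\<in>{l0..l1}. S x + D x \<le> 0"
  and iS: "(\<lambda>x. \<bar>S x\<bar>) integrable_on {l0..l1}"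
  and CS: "\<forall>l\<in>{l0..l1}. integral {l0..l} (\<lambda>x. \<bar>S x\<bar>) \<le> CS"
  shows "sqrt (w' l ^ 2 + c^2 * w l ^ 2 + eps) \<le> exp CS * (sqrt (w' l0 ^ 2 + c^2 * w l0 ^ 2 + eps) + integral {l0..l} (\<lambda>t. \<bar>f t\<bar>))"
proof -
  define Dp where "Dp x = max (D x) 0" for x
  define P where "P x = integral {l0..x} Dp" for x
  define F where "F x = sqrt (w' x ^ 2 + c^2 * w x ^ 2 + eps)" for x
  define H where "H x = exp (- P x) * F x" for x
  have cDp: "continuous_on {l0..l1} Dp" unfolding Dp_def by (intro continuous_intros cD)
  have Fpos: "F x > 0" for x unfolding F_def using eps by (intro real_sqrt_gt_zero) (auto intro: add_nonneg_pos)
  have dP: "(P has_real_derivative Dp x) (at x within {l0..l1})" if "x \<in> {l0..l1}" for x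
    unfolding P_def by (rule integral_has_real_derivative[OF cDp that])
  have Pnn: "P x \<ge> 0" if "x \<in> {l0..l1}" for x
  proof -
    have "continuous_on {l0..x} Dp" using cDp that by (auto intro: continuous_on_subset)
    then have "Dp integrable_on {l0..x}" by (rule integrable_continuous_real)
    then show ?thesis unfolding P_def by (rule integral_nonneg) (auto simp: Dp_def)
  qed
  have PCS: "P l \<le> CS"
  proof -
    have "continuous_on {l0..l} Dp" using cDp l by (auto intro: continuous_on_subset)
    then have "Dp integrable_on {l0..l}" by (rule integrable_continuous_real)
    moreover have "(\<lambda>x. \<bar>S x\<bar>) integrable_on {l0..l}" by (rule integrable_on_subinterval[OF iS]) (use l in auto)
    moreover have "Dp x \<le> \<bar>S x\<bar>" if "x \<in> {l0..l}" for x
    proof -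
      have "S x + D x \<le> 0" using SD that l by auto
      then show ?thesis by (auto simp: Dp_def)
    qed
    ultimately have "P l \<le> integral {l0..l} (\<lambda>x. \<bar>S x\<bar>)" unfolding P_def by (intro integral_le) auto
    also have "\<dots> \<le> CS" using CS l by auto
    finally show ?thesis .
  qed
  have dH: "(H has_real_derivative (exp (- P x) * (- Dp x) * F x + exp (- P x) * (inverse (F x) / 2 * (2 * w' x * w'' x + c^2 * (2 * w x * w' x))))) (at x within {l0..l1})"
    if x: "x \<in> {l0..l1}" for x
  proof -
    have pos: "w' x ^ 2 + c^2 * w x ^ 2 + eps > 0" using eps by (auto intro: add_nonneg_pos)
    have dE: "((\<lambda>x. w' x ^ 2 + c^2 * w x ^ 2 + eps) has_real_derivative (2 * w' x * w'' x + c^2 * (2 * w x * w' x))) (at x within {l0..l1})"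
      using dw[rule_format, OF x] dw'[rule_format, OF x]
      by (auto intro!: derivative_eq_intros)
    have dF: "(F has_real_derivative (inverse (F x) / 2 * (2 * w' x * w'' x + c^2 * (2 * w x * w' x)))) (at x within {l0..l1})"
      unfolding F_def using DERIV_chain2[OF DERIV_real_sqrt[OF pos] dE] by (simp add: F_def)
    have dexp: "((\<lambda>x. exp (- P x)) has_real_derivative (exp (- P x) * (- Dp x))) (at x within {l0..l1})"
      using dP[OF x] by (auto intro!: derivative_eq_intros)
    show ?thesis unfolding H_def by (rule DERIV_cong[OF DERIV_mult[OF dexp dF]]) (simp add: algebra_simps)
  qed
  define H' where "H' x = exp (- P x) * (- Dp x) * F x + exp (- P x) * (inverse (F x) / 2 * (2 * w' x * w'' x + c^2 * (2 * w x * w' x)))" for x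
  have H'le: "H' x \<le> \<bar>f x\<bar>" if x: "x \<in> {l0..l1}" for x
  proof -
    define a where "a = w' x"
    define B where "B = - Dp x * F x + (a * f x + D x * a^2) / F x"
    have Fx: "F x > 0" by (rule Fpos)
    have "H' x = exp (- P x) * B"
    proof -
      have e: "w'' x = f x + D x * w' x - c^2 * w x" using ode[rule_format, OF x] by simp
      show ?thesis unfolding H'_def B_def a_def e using Fx
        by (simp add: field_simps power2_eq_square)
    qed
    have F2: "(F x)^2 = w' x ^ 2 + c^2 * w x ^ 2 + eps" unfolding F_def
      by (rule real_sqrt_pow2) (use eps in \<open>auto intro: add_nonneg_nonneg\<close>)
    have "0 \<le> c^2 * w x ^ 2" by simp
    then have aF: "a^2 \<le> (F x)^2" unfolding F2 a_def using eps by linarith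
    have aF': "\<bar>a\<bar> \<le> F x"
      by (rule power2_le_imp_le) (use aF Fx in auto)
    have "a * f x \<le> \<bar>a * f x\<bar>" by (rule abs_ge_self)
    also have "\<dots> = \<bar>a\<bar> * \<bar>f x\<bar>" by (rule abs_mult)
    also have "\<dots> \<le> F x * \<bar>f x\<bar>" by (rule mult_right_mono[OF aF']) simp
    finally have af: "a * f x \<le> F x * \<bar>f x\<bar>" .
    have Da: "D x * a^2 \<le> Dp x * (F x)^2"
    proof -
      have "D x * a^2 \<le> Dp x * a^2" by (intro mult_right_mono) (auto simp: Dp_def)
      also have "\<dots> \<le> Dp x * (F x)^2" by (intro mult_left_mono aF) (auto simp: Dp_def)
      finally show ?thesis .
    qed
    have BF: "B * F x = - Dp x * (F x)^2 + (a * f x + D x * a^2)"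
      unfolding B_def using Fx by (simp add: field_simps power2_eq_square)
    have "B * F x \<le> \<bar>f x\<bar> * F x"
      unfolding BF using af Da by (simp add: algebra_simps)
    then have B: "B \<le> \<bar>f x\<bar>" using Fx by simp
    have "exp (- P x) * B \<le> \<bar>f x\<bar>"
    proof (cases "B \<ge> 0")
      case True
      have "exp (- P x) \<le> 1" using Pnn[OF x] by simp
      then have "exp (- P x) * B \<le> 1 * B" using True by (intro mult_right_mono) auto
      then show ?thesis using B by simp
    next
      case False
      then have "exp (- P x) * B < 0" by (simp add: mult_pos_neg)
      then show ?thesis by simp
    qed
    then show ?thesis using \<open>H' x = exp (- P x) * B\<close> by simp
  qed
  have sub: "{l0..l} \<subseteq> {l0..l1}" using l by auto
  have "(H' has_integral (H l - H l0)) {l0..l}"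
  proof (rule fundamental_theorem_of_calculus)
    show "l0 \<le> l" using l by simp
    fix x assume x: "x \<in> {l0..l}"
    then have "x \<in> {l0..l1}" using sub by auto
    from DERIV_subset[OF dH[OF this] sub] show "(H has_vector_derivative H' x) (at x within {l0..l})"
      unfolding H'_def by (simp add: has_real_derivative_iff_has_vector_derivative)
  qed
  moreover have "((\<lambda>t. \<bar>f t\<bar>) has_integral integral {l0..l} (\<lambda>t. \<bar>f t\<bar>)) {l0..l}"
  proof -
    have "continuous_on {l0..l} (\<lambda>t. \<bar>f t\<bar>)" using cf sub by (auto intro!: continuous_intros intro: continuous_on_subset)
    then show ?thesis by (intro integrable_integral integrable_continuous_real)
  qed
  ultimately have HI: "H l - H l0 \<le> integral {l0..l} (\<lambda>t. \<bar>f t\<bar>)"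
    by (rule has_integral_le) (use H'le sub in auto)
  have Inn: "integral {l0..l} (\<lambda>t. \<bar>f t\<bar>) \<ge> 0"
    by (rule integral_nonneg) (use \<open>((\<lambda>t. \<bar>f t\<bar>) has_integral _) _\<close> in auto)
  have P0: "P l0 = 0" unfolding P_def by simp
  have "F l = exp (P l) * H l" unfolding H_def by (simp add: exp_minus field_simps)
  also have "\<dots> \<le> exp (P l) * (F l0 + integral {l0..l} (\<lambda>t. \<bar>f t\<bar>))"
    using HI P0 unfolding H_def by (intro mult_left_mono) auto
  also have "\<dots> \<le> exp CS * (F l0 + integral {l0..l} (\<lambda>t. \<bar>f t\<bar>))"
    using PCS Inn Fpos[of l0] by (intro mult_right_mono) auto
  finally show ?thesis unfolding F_def .
qed

lemma sqrt_bounds: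
  fixes a b c :: real assumes c: "c > 0"
  shows "\<bar>a\<bar> \<le> sqrt (a^2 + c^2 * b^2)" "c * \<bar>b\<bar> \<le> sqrt (a^2 + c^2 * b^2)"
    "sqrt (a^2 + c^2 * b^2) \<le> \<bar>a\<bar> + c * \<bar>b\<bar>"
proof -
  show "\<bar>a\<bar> \<le> sqrt (a^2 + c^2 * b^2)"
    by (rule real_le_rsqrt) simp
  show "c * \<bar>b\<bar> \<le> sqrt (a^2 + c^2 * b^2)"
    by (rule real_le_rsqrt) (simp add: power_mult_distrib)
  have "a^2 + c^2 * b^2 \<le> (\<bar>a\<bar> + c * \<bar>b\<bar>)^2"
    using c by (simp add: power2_sum power_mult_distrib)
  then show "sqrt (a^2 + c^2 * b^2) \<le> \<bar>a\<bar> + c * \<bar>b\<bar>"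
    by (intro real_le_lsqrt) (use c in auto)
qed

lemma core2:
  fixes c CS l0 l1 l :: real and w w' w'' D f S :: "real \<Rightarrow> real"
  assumes c: "c > 0" and l: "l0 \<le> l" "l \<le> l1"
  and dw: "\<forall>x\<in>{l0..l1}. (w has_real_derivative w' x) (at x within {l0..l1})"
  and dw': "\<forall>x\<in>{l0..l1}. (w' has_real_derivative w'' x) (at x within {l0..l1})"
  and cD: "continuous_on {l0..l1} D" and cf: "continuous_on {l0..l1} f"
  and ode: "\<forall>x\<in>{l0..l1}. w'' x - D x * w' x + c\<^sup>2 * w x = f x"
  and SD: "\<forall>x\<in>{l0..l1}. S x + D x \<le> 0"
  and iS: "(\<lambda>x. \<bar>S x\<bar>) integrable_on {l0..l1}"
  and CS: "\<forall>l\<in>{l0..l1}. integral {l0..l} (\<lambda>x. \<bar>S x\<bar>) \<le> CS"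
  shows "sqrt (w' l ^ 2 + c^2 * w l ^ 2) \<le> exp CS * (sqrt (w' l0 ^ 2 + c^2 * w l0 ^ 2) + integral {l0..l} (\<lambda>t. \<bar>f t\<bar>))"
proof (rule field_le_epsilon)
  fix e :: real assume e: "e > 0"
  define d where "d = e / exp CS"
  have d: "d > 0" using e by (simp add: d_def)
  have "sqrt (w' l ^ 2 + c^2 * w l ^ 2) \<le> sqrt (w' l ^ 2 + c^2 * w l ^ 2 + d^2)"
    by simp
  also have "\<dots> \<le> exp CS * (sqrt (w' l0 ^ 2 + c^2 * w l0 ^ 2 + d^2) + integral {l0..l} (\<lambda>t. \<bar>f t\<bar>))"
    by (rule core[OF c _ l dw dw' cD cf ode SD iS CS]) (use d in simp)
  also have "\<dots> \<le> exp CS * (sqrt (w' l0 ^ 2 + c^2 * w l0 ^ 2) + d + integral {l0..l} (\<lambda>t. \<bar>f t\<bar>))"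
  proof -
    have "sqrt (w' l0 ^ 2 + c^2 * w l0 ^ 2 + d^2) \<le> sqrt (w' l0 ^ 2 + c^2 * w l0 ^ 2) + sqrt (d^2)"
      by (rule sqrt_add_le_add_sqrt) auto
    then show ?thesis using d by (intro mult_left_mono) auto
  qed
  also have "\<dots> = exp CS * (sqrt (w' l0 ^ 2 + c^2 * w l0 ^ 2) + integral {l0..l} (\<lambda>t. \<bar>f t\<bar>)) + e"
    by (simp add: d_def algebra_simps)
  finally show "sqrt (w' l ^ 2 + c^2 * w l ^ 2) \<le> exp CS * (sqrt (w' l0 ^ 2 + c^2 * w l0 ^ 2) + integral {l0..l} (\<lambda>t. \<bar>f t\<bar>)) + e" .
qed

theorem lemma3p3:
  fixes c C_S :: real
  assumes "c > 0"
  shows "\<exists>C::real. \<forall>(w::real \<Rightarrow> real) w' w'' (D::real \<Rightarrow> real) (f::real \<Rightarrow> real)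
            (S::real \<Rightarrow> real) (l0::real) (l1::real).
     (\<forall>x\<in>{l0..l1}. (w has_real_derivative w' x) (at x within {l0..l1})) \<and>
     (\<forall>x\<in>{l0..l1}. (w' has_real_derivative w'' x) (at x within {l0..l1})) \<and>
     continuous_on {l0..l1} D \<and> continuous_on {l0..l1} f \<and>
     (\<forall>x\<in>{l0..l1}. w'' x - D x * w' x + c\<^sup>2 * w x = f x) \<and>
     (\<forall>x\<in>{l0..l1}. \<bar>D x\<bar> \<le> c) \<and>
     (\<forall>x\<in>{l0..l1}. S x + D x \<le> 0) \<and>
     (\<lambda>x. \<bar>S x\<bar>) integrable_on {l0..l1} \<and>
     (\<forall>l\<in>{l0..l1}. integral {l0..l} (\<lambda>x. \<bar>S x\<bar>) \<le> C_S)
     \<longrightarrow> (\<forall>l\<in>{l0..l1}. \<bar>w l\<bar> + \<bar>w' l\<bar>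
            \<le> C * (\<bar>w l0\<bar> + \<bar>w' l0\<bar> + integral {l0..l} (\<lambda>t. \<bar>f t\<bar>)))"
proof (intro exI allI impI ballI, elim conjE)
  note c = assms
  fix w w' w'' D f S :: "real \<Rightarrow> real" and l0 l1 l :: real
  assume dw: "\<forall>x\<in>{l0..l1}. (w has_real_derivative w' x) (at x within {l0..l1})"
  and dw': "\<forall>x\<in>{l0..l1}. (w' has_real_derivative w'' x) (at x within {l0..l1})"
  and cD: "continuous_on {l0..l1} D" and cf: "continuous_on {l0..l1} f"
  and ode: "\<forall>x\<in>{l0..l1}. w'' x - D x * w' x + c\<^sup>2 * w x = f x"
  and SD: "\<forall>x\<in>{l0..l1}. S x + D x \<le> 0"
  and iS: "(\<lambda>x. \<bar>S x\<bar>) integrable_on {l0..l1}"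
  and CS: "\<forall>l\<in>{l0..l1}. integral {l0..l} (\<lambda>x. \<bar>S x\<bar>) \<le> C_S"
  and lin: "l \<in> {l0..l1}"
  then have l: "l0 \<le> l" "l \<le> l1" by auto
  define I where "I = integral {l0..l} (\<lambda>t. \<bar>f t\<bar>)"
  define E where "E x = sqrt (w' x ^ 2 + c^2 * w x ^ 2)" for x
  have Inn: "I \<ge> 0" unfolding I_def
  proof (rule integral_nonneg)
    have "continuous_on {l0..l} (\<lambda>t. \<bar>f t\<bar>)" using cf l by (auto intro!: continuous_intros intro: continuous_on_subset)
    then show "(\<lambda>t. \<bar>f t\<bar>) integrable_on {l0..l}" by (rule integrable_continuous_real)
  qed auto
  have main: "E l \<le> exp C_S * (E l0 + I)" unfolding E_def I_def
    by (rule core2[OF c l dw dw' cD cf ode SD iS CS])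
  have b1: "\<bar>w l\<bar> + \<bar>w' l\<bar> \<le> (1 + 1/c) * E l"
  proof -
    have "\<bar>w' l\<bar> \<le> E l" "c * \<bar>w l\<bar> \<le> E l" unfolding E_def using sqrt_bounds[OF c] by auto
    then have "\<bar>w l\<bar> \<le> E l / c" using c by (simp add: field_simps)
    then show ?thesis using \<open>\<bar>w' l\<bar> \<le> E l\<close> by (simp add: algebra_simps)
  qed
  have b0: "E l0 \<le> max 1 c * (\<bar>w l0\<bar> + \<bar>w' l0\<bar>)"
  proof -
    have "E l0 \<le> \<bar>w' l0\<bar> + c * \<bar>w l0\<bar>" unfolding E_def using sqrt_bounds[OF c] by auto
    also have "\<dots> \<le> max 1 c * \<bar>w' l0\<bar> + max 1 c * \<bar>w l0\<bar>"
    proof (intro add_mono mult_right_mono)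
      have "1 * \<bar>w' l0\<bar> \<le> max 1 c * \<bar>w' l0\<bar>" by (intro mult_right_mono) auto
      then show "\<bar>w' l0\<bar> \<le> max 1 c * \<bar>w' l0\<bar>" by simp
    qed auto
    finally show ?thesis by (simp add: algebra_simps)
  qed
  have "\<bar>w l\<bar> + \<bar>w' l\<bar> \<le> (1 + 1/c) * (exp C_S * (E l0 + I))"
    using b1 main c by (meson dual_order.trans mult_left_mono divide_nonneg_pos less_imp_le zero_le_one add_nonneg_nonneg)
  also have "\<dots> \<le> (1 + 1/c) * (exp C_S * (max 1 c * (\<bar>w l0\<bar> + \<bar>w' l0\<bar>) + I))"
    using b0 c by (intro mult_left_mono add_right_mono) auto
  also have "\<dots> \<le> (1 + 1/c) * (exp C_S * (max 1 c * (\<bar>w l0\<bar> + \<bar>w' l0\<bar> + I)))"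
  proof -
    have "1 * I \<le> max 1 c * I" using Inn by (intro mult_right_mono) auto
    then have "I \<le> max 1 c * I" by simp
    then show ?thesis using c by (intro mult_left_mono) (auto simp: algebra_simps)
  qed
  finally show "\<bar>w l\<bar> + \<bar>w' l\<bar> \<le> ((1 + 1/c) * exp C_S * max 1 c) * (\<bar>w l0\<bar> + \<bar>w' l0\<bar> + integral {l0..l} (\<lambda>t. \<bar>f t\<bar>))"
    unfolding I_def by (simp add: algebra_simps)
qed
end
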